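(* Let $\mathcal{R}=(\mathcal{W},\mathcal{R}_1,\mathcal{R}_2)$ with $\mathcal{W}=\{1,\dots,m\}$, let $\mathcal{S}$, $L$, $K_1,\dots,K_4$ be constructed from $\mathcal{R}$ as below, and let $\mathcal{T}$ be a solution to the $\mathcal{S}$-cyclic triomino problem. Fix $s\in\mathbb{Z}^2$. If $p(s,i)$ holds for some $1\le i\le 4$, then $p(s,i)$ holds for every $1\le i\le 4$.
   Context: A domino set is $\mathcal{R}=(\mathcal{W},\mathcal{R}_1,\mathcal{R}_2)$ with $\mathcal{W}$ non-empty finite and $\mathcal{R}_1,\mathcal{R}_2\subset\mathcal{W}^2$; here $\mathcal{W}=\{1,\dots,m\}$. Let $u_1=(1,0),u_2=(0,1),u_3=(-1,0),u_4=(0,-1)$, indices mod 4. Fix $n\ge 2m+1$ and regard integers as elements of $\mathbb{Z}_n$. Let $L=\{(w,0,0): w\in\mathcal{W}\}$, $K_1=L\cup\{(0,b,a):(a,b)\in\mathcal{R}_1\}$, $K_2=L\cup\{(0,a,b):(a,b)\in\mathcal{R}_2\}$, $K_3=L\cup\{(0,a,b):(a,b)\in\mathcal{R}_1\}$, $K_4=L\cup\{(0,b,a):(a,b)\in\mathcal{R}_2\}$, with $K_{i+4}=K_i$. Let $\mathcal{V}=\mathbb{Z}_n$, $\mathcal{S}_i=\{(a+k,b+k,c+k):(a,b,c)\in K_i, k\in\mathcal{V}\}$, $\mathcal{S}_{i+4}=\mathcal{S}_i$, and $\mathcal{S}=(\mathcal{V},\mathcal{S}_1,\dots,\mathcal{S}_4)$.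 A solution to the $\mathcal{S}$-cyclic triomino problem is a function $\mathcal{T}:\mathbb{Z}^2\to\mathcal{V}$ with $(\mathcal{T}(s),\mathcal{T}(s+u_i),\mathcal{T}(s+u_{i+1}))\in\mathcal{S}_i$ for all $s$ and $1\le i\le 4$. For $s\in\mathbb{Z}^2$, $i\in\mathbb{Z}$, $p(s,i)$ is the statement $(\mathcal{T}(s),\mathcal{T}(s+u_i),\mathcal{T}(s+u_{i+1}))\in L$ and $q(s,i)$ is the statement $(\mathcal{T}(s),\mathcal{T}(s+u_i),\mathcal{T}(s+u_{i+1}))\in K_i\setminus L$. *)

theory Defs
  imports Main
begin

text \<open>Domino set with tile set W = {1..m} (m \<ge> 1), R1, R2 \<subseteq> W^2.
  Elements of Z_n are represented by integers in {0..<n}; an integer is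
  regarded as an element of Z_n via reduction mod n.\<close>

definition dir :: "int \<Rightarrow> int \<times> int" where
  "dir i = (if i mod 4 = 1 then (1, 0)
            else if i mod 4 = 2 then (0, 1)
            else if i mod 4 = 3 then (-1, 0)
            else (0, -1))"

definition vadd :: "int \<times> int \<Rightarrow> int \<times> int \<Rightarrow> int \<times> int" where
  "vadd s t = (fst s + fst t, snd s + snd t)"

definition Lset :: "int \<Rightarrow> (int \<times> int \<times> int) set" where
  "Lset m = {(w, 0, 0) | w. w \<in> {1..m}}"

definition Kset :: "int \<Rightarrow> (int \<times> int) set \<Rightarrow> (int \<times> int) set \<Rightarrow> int
                    \<Rightarrow> (int \<times> int \<times> int) set" where
  "Kset m R1 R2 i = Lset m \<union>
     (if i mod 4 = 1 then {(0, b, a) | a b. (a, b) \<in> R1}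
      else if i mod 4 = 2 then {(0, a, b) | a b. (a, b) \<in> R2}
      else if i mod 4 = 3 then {(0, a, b) | a b. (a, b) \<in> R1}
      else {(0, b, a) | a b. (a, b) \<in> R2})"

definition red3 :: "int \<Rightarrow> int \<times> int \<times> int \<Rightarrow> int \<times> int \<times> int" where
  "red3 n t = (case t of (a, b, c) \<Rightarrow> (a mod n, b mod n, c mod n))"

definition Sset :: "int \<Rightarrow> int \<Rightarrow> (int \<times> int) set \<Rightarrow> (int \<times> int) set \<Rightarrow> int
                    \<Rightarrow> (int \<times> int \<times> int) set" where
  "Sset n m R1 R2 i = {red3 n (a + k, b + k, c + k) | a b c k.
                         (a, b, c) \<in> Kset m R1 R2 i \<and> k \<in> {0..<n}}"

definition triple_at :: "(int \<times> int \<Rightarrow> int) \<Rightarrow> int \<times> int \<Rightarrow> int \<Rightarrow> int \<times> int \<times> int" where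
  "triple_at T s i = (T s, T (vadd s (dir i)), T (vadd s (dir (i + 1))))"

definition cyclic_triomino_solution ::
  "int \<Rightarrow> int \<Rightarrow> (int \<times> int) set \<Rightarrow> (int \<times> int) set \<Rightarrow> (int \<times> int \<Rightarrow> int) \<Rightarrow> bool" where
  "cyclic_triomino_solution n m R1 R2 T \<longleftrightarrow>
     (\<forall>s. T s \<in> {0..<n}) \<and>
     (\<forall>s. \<forall>i\<in>{1..4}. triple_at T s i \<in> Sset n m R1 R2 i)"

definition p_prop :: "int \<Rightarrow> int \<Rightarrow> (int \<times> int \<Rightarrow> int) \<Rightarrow> int \<times> int \<Rightarrow> int \<Rightarrow> bool" where
  "p_prop n m T s i \<longleftrightarrow> triple_at T s i \<in> red3 n ` Lset m"

end

theory Submission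
  imports Defs
begin

lemma key:
  assumes "n \<ge> 2 * m + 1" "m \<ge> 1"
    and R1: "R1 \<subseteq> {1..m} \<times> {1..m}" and R2: "R2 \<subseteq> {1..m} \<times> {1..m}"
    and mem: "(x, y, z) \<in> Sset n m R1 R2 j"
    and x: "x \<in> {1..m}" and y: "y = 0"
  shows "z = 0"
proof -
  from mem obtain a b c k where abc: "(a,b,c) \<in> Kset m R1 R2 j" "k \<in> {0..<n}"
    and eq: "(x,y,z) = red3 n (a+k,b+k,c+k)"
    unfolding Sset_def by blast
  have ex: "x = (a+k) mod n" "y = (b+k) mod n" "z = (c+k) mod n"
    using eq by (auto simp: red3_def)
  show ?thesis
  proof (cases "(a,b,c) \<in> Lset m")
    case True
    then have "b = 0" "c = 0" by (auto simp: Lset_def)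
    then show ?thesis using ex y by simp
  next
    case False
    then have "a = 0 \<and> b \<in> {1..m}"
      using abc(1) R1 R2 unfolding Kset_def by (auto split: if_splits)
    then have "a = 0" "b \<ge> 1" "b \<le> m" by auto
    then have "x = k" using ex abc(2) by simp
    then have "y = b + x" using ex \<open>a = 0\<close> abc(2) x assms(1) \<open>b \<le> m\<close> \<open>b \<ge> 1\<close>
      by (simp add: mod_pos_pos_trivial)
    then show ?thesis using y x \<open>b \<ge> 1\<close> by simp
  qed
qed

lemma dir_mod: "dir (j + 4) = dir j"
  unfolding dir_def by simp

theorem lemma3p2:
  fixes m n :: int and R1 R2 :: "(int \<times> int) set"
    and T :: "int \<times> int \<Rightarrow> int" and s :: "int \<times> int" and i :: int
  assumes "m \<ge> 1"
    and "R1 \<subseteq> {1..m} \<times> {1..m}" and "R2 \<subseteq> {1..m} \<times> {1..m}"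
    and "n \<ge> 2 * m + 1"
    and "cyclic_triomino_solution n m R1 R2 T"
    and "i \<in> {1..4}" and "p_prop n m T s i"
  shows "\<forall>j\<in>{1..4}. p_prop n m T s j"
proof -
  define a where "a j = T (vadd s (dir j))" for j
  have mem: "(T s, a j, a (j+1)) \<in> Sset n m R1 R2 j" if "j \<in> {1..4}" for j
    using assms(5) that unfolding cyclic_triomino_solution_def triple_at_def a_def by blast
  from assms(7) obtain w where w: "w \<in> {1..m}" "(T s, a i, a (i+1)) = red3 n (w,0,0)"
    unfolding p_prop_def triple_at_def Lset_def a_def by auto
  have Ts: "T s = w" using w assms(4) by (auto simp: red3_def mod_pos_pos_trivial)
  have ai: "a i = 0" "a (i+1) = 0" using w by (auto simp: red3_def)
  have step: "a j = 0 \<Longrightarrow> a (j+1) = 0" if "j \<in> {1..4}" for j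
    using key[OF assms(4,1,2,3) mem[OF that]] Ts w(1) by blast
  have a5: "a 5 = a 1" unfolding a_def using dir_mod[of 1] by simp
  have i4: "i = 1 \<or> i = 2 \<or> i = 3 \<or> i = 4" using assms(6) by auto
  have all: "a 1 = 0 \<and> a 2 = 0 \<and> a 3 = 0 \<and> a 4 = 0"
    using i4 ai step[of 1] step[of 2] step[of 3] step[of 4] a5 by auto
  show ?thesis
  proof
    fix j :: int assume j: "j \<in> {1..4}"
    have j4: "j = 1 \<or> j = 2 \<or> j = 3 \<or> j = 4" using j by auto
    have "a j = 0" "a (j+1) = 0" using j4 all a5 by auto
    moreover have "red3 n (w,0,0) = (w,0,0)" using w(1) assms(4)
      by (auto simp: red3_def mod_pos_pos_trivial)
    ultimately show "p_prop n m T s j"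
      unfolding p_prop_def triple_at_def Lset_def a_def[symmetric] using Ts w(1)
      by (metis (mono_tags, lifting) image_eqI mem_Collect_eq)
  qed
qed

end
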